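(* Let $\mathbf{W}=\langle W;\to,\neg,{}^{+},{}^{-},1\rangle$ be a quasi-Wajsberg* algebra, $0:=1\to 1$ and $x\wedge y:=\neg(\neg x\vee\neg y)$. Then for any $x,y\in W$: (1) $x\vee 0=0\to x^{+}$ and $x\wedge 0=0\to x^{-}$; (2) $x^{+}\vee 0=0\to x^{+}$, $x^{-}\wedge 0=0\to x^{-}$, $x^{-}\vee 0=0$ and $x^{+}\wedge 0=0$; (3) $x\vee y=\neg(x^{+}\vee y^{+})\to(x^{-}\vee y^{-})$ and $x\wedge y=\neg(x^{+}\wedge y^{+})\to(x^{-}\wedge y^{-})$; (4) $x^{+}\vee x^{-}=0\to x^{+}$ and $x^{+}\wedge x^{-}=0\to x^{-}$; (5) $0\to x=\neg x^{+}\to x^{-}$; (6) $(x\vee y)^{+}=x^{+}\vee y^{+}$, $(x\vee y)^{-}=x^{-}\vee y^{-}$, $(x\wedge y)^{+}=x^{+}\wedge y^{+}$ and $(x\wedge y)^{-}=x^{-}\wedge y^{-}$; (7) $x\vee(x\wedge y)=x\vee x$ and $x\wedge(x\vee y)=x\wedge x$.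
   Context: A quasi-Wajsberg* algebra is an algebra $\langle W;\to,\neg,{}^{+},{}^{-},1\rangle$ of type $\langle2,1,1,1,0\rangle$ such that for all $x,y,z\in W$: (QW*1) $x\to y=\neg y\to\neg x$; (QW*2) $(x\to 1)\to((y\to 1)\to z)=(y\to 1)\to((x\to 1)\to z)$; (QW*3) $(1\to x)\to 1=1$; (QW*4) $(z\to z)\to(x\to y)=x\to y$; (QW*5) $(1\to 1)\to x^{+}=((1\to 1)\to x)^{+}=(x\to 1)\to 1$ and $(1\to 1)\to x^{-}=((1\to 1)\to x)^{-}=(x\to\neg 1)\to\neg 1$; (QW*6) $x\to y=(y^{+}\to x^{-})\to(x^{+}\to y^{-})$; (QW*7) $\neg(x\to y)=y\to x$; (QW*8) $\neg\neg x=x$; (QW*9) $(x\to(\neg x\to y))^{+}=x^{+}\to(\neg x^{+}\to y^{+})$; (QW*10) $x\vee y=y\vee x$; (QW*11) $x\vee(y\vee z)=(x\vee y)\vee z$; (QW*12) $x\to(y\vee z)=(x\to y)\vee(x\to z)$; where $x\vee y:=((x^{+}\to y^{+})^{+}\to(\neg x)^{-})\to((y^{-}\to x^{-})^{-}\to x^{-})$. Conventions: ${}^+,{}^-$ bind tighter than $\neg$, which binds tighter than $\to$, and $\to$ binds tighter than $\vee,\wedge$. *)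

theory Defs
  imports Main
begin

text \<open>Quasi-Wajsberg* algebras, with carrier the whole type 'a.
  imp = \<open>\<rightarrow>\<close>, neg = \<open>\<not>\<close>, pl = \<open>^+\<close>, mi = \<open>^-\<close>, one = 1.\<close>

definition qw_join :: "('a \<Rightarrow> 'a \<Rightarrow> 'a) \<Rightarrow> ('a \<Rightarrow> 'a) \<Rightarrow> ('a \<Rightarrow> 'a) \<Rightarrow> ('a \<Rightarrow> 'a) \<Rightarrow> 'a \<Rightarrow> 'a \<Rightarrow> 'a"
  where "qw_join imp neg pl mi x y =
    imp (imp (pl (imp (pl x) (pl y))) (mi (neg x))) (imp (mi (imp (mi y) (mi x))) (mi x))"

definition qw_meet :: "('a \<Rightarrow> 'a \<Rightarrow> 'a) \<Rightarrow> ('a \<Rightarrow> 'a) \<Rightarrow> ('a \<Rightarrow> 'a) \<Rightarrow> ('a \<Rightarrow> 'a) \<Rightarrow> 'a \<Rightarrow> 'a \<Rightarrow> 'a"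
  where "qw_meet imp neg pl mi x y = neg (qw_join imp neg pl mi (neg x) (neg y))"

definition quasi_wajsberg_star ::
  "('a \<Rightarrow> 'a \<Rightarrow> 'a) \<Rightarrow> ('a \<Rightarrow> 'a) \<Rightarrow> ('a \<Rightarrow> 'a) \<Rightarrow> ('a \<Rightarrow> 'a) \<Rightarrow> 'a \<Rightarrow> bool"
  where "quasi_wajsberg_star imp neg pl mi one \<longleftrightarrow>
    (\<forall>x y. imp x y = imp (neg y) (neg x)) \<and>
    (\<forall>x y z. imp (imp x one) (imp (imp y one) z) = imp (imp y one) (imp (imp x one) z)) \<and>
    (\<forall>x. imp (imp one x) one = one) \<and>
    (\<forall>x y z. imp (imp z z) (imp x y) = imp x y) \<and>
    (\<forall>x. imp (imp one one) (pl x) = pl (imp (imp one one) x) \<and>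
         pl (imp (imp one one) x) = imp (imp x one) one) \<and>
    (\<forall>x. imp (imp one one) (mi x) = mi (imp (imp one one) x) \<and>
         mi (imp (imp one one) x) = imp (imp x (neg one)) (neg one)) \<and>
    (\<forall>x y. imp x y = imp (imp (pl y) (mi x)) (imp (pl x) (mi y))) \<and>
    (\<forall>x y. neg (imp x y) = imp y x) \<and>
    (\<forall>x. neg (neg x) = x) \<and>
    (\<forall>x y. pl (imp x (imp (neg x) y)) = imp (pl x) (imp (neg (pl x)) (pl y))) \<and>
    (\<forall>x y. qw_join imp neg pl mi x y = qw_join imp neg pl mi y x) \<and>
    (\<forall>x y z. qw_join imp neg pl mi x (qw_join imp neg pl mi y z) =
             qw_join imp neg pl mi (qw_join imp neg pl mi x y) z) \<and>
    (\<forall>x y z. imp x (qw_join imp neg pl mi y z) =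
             qw_join imp neg pl mi (imp x y) (imp x z))"

end

theory Submission
  imports Defs
begin

locale qw =
  fixes imp :: "'a \<Rightarrow> 'a \<Rightarrow> 'a" (infixr "\<rhd>" 60) and neg pl mi :: "'a \<Rightarrow> 'a" and one :: 'a
  assumes A1: "x \<rhd> y = neg y \<rhd> neg x"
  and A2: "(x \<rhd> one) \<rhd> ((y \<rhd> one) \<rhd> z) = (y \<rhd> one) \<rhd> ((x \<rhd> one) \<rhd> z)"
  and A3: "(one \<rhd> x) \<rhd> one = one"
  and A4: "(z \<rhd> z) \<rhd> (x \<rhd> y) = x \<rhd> y"
  and A5a: "(one \<rhd> one) \<rhd> pl x = pl ((one \<rhd> one) \<rhd> x)"
  and A5b: "pl ((one \<rhd> one) \<rhd> x) = (x \<rhd> one) \<rhd> one"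
  and A5c: "(one \<rhd> one) \<rhd> mi x = mi ((one \<rhd> one) \<rhd> x)"
  and A5d: "mi ((one \<rhd> one) \<rhd> x) = (x \<rhd> neg one) \<rhd> neg one"
  and A6: "x \<rhd> y = (pl y \<rhd> mi x) \<rhd> (pl x \<rhd> mi y)"
  and A7: "neg (x \<rhd> y) = y \<rhd> x"
  and A8: "neg (neg x) = x"
  and A9: "pl (x \<rhd> (neg x \<rhd> y)) = pl x \<rhd> (neg (pl x) \<rhd> pl y)"
  and A10: "qw_join imp neg pl mi x y = qw_join imp neg pl mi y x"
  and A11: "qw_join imp neg pl mi x (qw_join imp neg pl mi y z) = qw_join imp neg pl mi (qw_join imp neg pl mi x y) z"
  and A12: "x \<rhd> qw_join imp neg pl mi y z = qw_join imp neg pl mi (x \<rhd> y) (x \<rhd> z)"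
begin
abbreviation "J \<equiv> qw_join imp neg pl mi"
abbreviation "zero \<equiv> one \<rhd> one"
abbreviation "M a b \<equiv> neg (J (neg a) (neg b))"
lemma Jd: "J x y = ((pl (pl x \<rhd> pl y)) \<rhd> mi (neg x)) \<rhd> ((mi (mi y \<rhd> mi x)) \<rhd> mi x)"
  by (simp add: qw_join_def)
lemma c1: "zero \<rhd> (x \<rhd> y) = x \<rhd> y"
  using A4 by simp
lemma c2: "neg zero = zero"
  using A7 by simp
lemma c3: "pl zero = zero"
  by (metis A3 A4 A5b)
lemma c4: "mi zero = zero"
  by (metis A3 A4 A5d A7)
lemma e0: "zero \<rhd> neg x = neg (zero \<rhd> x)"
proof -
  have "zero \<rhd> neg x = neg (neg x) \<rhd> neg zero" by (rule A1)
  then show ?thesis by (simp add: A8 c2 A7)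
qed
lemma zz: "z \<rhd> z = zero"
  by (metis A4 A7)
lemma h1: "zero \<rhd> x = (zero \<rhd> neg (pl x)) \<rhd> (zero \<rhd> mi x)"
  by (metis A1 A6 c2 c3 c4)
lemma h2: "zero \<rhd> mi (neg x) = zero \<rhd> neg (pl x)"
  by (metis A1 A5a A5b A5c A5d A7)
lemma Jxx: "J x x = zero \<rhd> x"
proof -
  have "J x x = (zero \<rhd> mi (neg x)) \<rhd> (zero \<rhd> mi x)"
    unfolding Jd zz[of "pl x"] zz[of "mi x"] c3 c4 ..
  also have "... = zero \<rhd> x" unfolding h2 by (rule h1[symmetric])
  finally show ?thesis .
qed
lemma c6: "a \<rhd> (zero \<rhd> b) = a \<rhd> b"
proof -
  have "a \<rhd> (zero \<rhd> b) = a \<rhd> J b b" by (simp only: Jxx)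
  also have "... = J (a \<rhd> b) (a \<rhd> b)" by (rule A12)
  also have "... = a \<rhd> b" by (simp only: Jxx c1)
  finally show ?thesis .
qed
lemma c5: "(zero \<rhd> a) \<rhd> b = a \<rhd> b"
proof -
  have "(zero \<rhd> a) \<rhd> b = neg b \<rhd> neg (zero \<rhd> a)" by (rule A1)
  also have "... = neg b \<rhd> neg a" by (simp only: e0[symmetric] c6)
  also have "... = a \<rhd> b" by (rule A1[symmetric])
  finally show ?thesis .
qed
lemma g5: "zero \<rhd> x = neg (pl x) \<rhd> mi x"
  using h1[of x] by (simp only: c5 c6)
lemma d4: "zero \<rhd> mi (pl x) = zero"
  by (metis A3 A5a A5b A5c A7 c1 h2)
lemma d5: "zero \<rhd> pl (mi x) = zero"
  by (metis A1 A3 A4 A5a A5b A5c A5d A7)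
lemma d3: "zero \<rhd> pl (pl x) = zero \<rhd> pl x"
  by (metis A1 A3 A4 A5a A5b A5d A7 g5)
lemma d6: "zero \<rhd> mi (mi x) = zero \<rhd> mi x"
  by (metis A3 A4 A5b A5c A7 g5 h2)
lemma G1a: "J x zero = zero \<rhd> pl x"
  by (metis A1 A10 A3 A5b A5c A5d A7 A9 Jd c1)
lemma Lmi: "zero \<rhd> mi w = one \<rhd> (neg one \<rhd> w)"
proof -
  have "zero \<rhd> mi w = (w \<rhd> neg one) \<rhd> neg one" using A5c A5d by simp
  also have "... = neg (neg one) \<rhd> neg (w \<rhd> neg one)" by (rule A1)
  also have "... = one \<rhd> (neg one \<rhd> w)" by (simp only: A7 A8)
  finally show ?thesis .
qed
lemma Lpl: "zero \<rhd> pl w = neg one \<rhd> (one \<rhd> w)"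
proof -
  have "zero \<rhd> pl w = (w \<rhd> one) \<rhd> one" using A5a A5b by simp
  also have "... = neg one \<rhd> neg (w \<rhd> one)" by (rule A1)
  also have "... = neg one \<rhd> (one \<rhd> w)" by (simp only: A7 A8)
  finally show ?thesis .
qed
lemma JR1: "J (zero \<rhd> a) b = J a b"
  unfolding Jd by (simp only: A5a[symmetric] A5c[symmetric] e0[symmetric] c5 c6)
lemma JR2: "J a (zero \<rhd> b) = J a b"
  using JR1 A10 by metis
lemma plJ: "pl (J x y) = zero \<rhd> pl (J x y)"
  unfolding Jd by (simp only: A5a c1)
lemma miJ: "mi (J x y) = zero \<rhd> mi (J x y)"
  unfolding Jd by (simp only: A5c c1)
lemma G6b: "mi (J x y) = J (mi x) (mi y)"
proof -
  have "mi (J x y) = one \<rhd> (neg one \<rhd> J x y)" using miJ Lmi by metis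
  also have "... = J (one \<rhd> (neg one \<rhd> x)) (one \<rhd> (neg one \<rhd> y))" by (simp only: A12)
  also have "... = J (mi x) (mi y)" by (simp only: Lmi[symmetric] JR1 JR2)
  finally show ?thesis .
qed
lemma G6a: "pl (J x y) = J (pl x) (pl y)"
proof -
  have "pl (J x y) = neg one \<rhd> (one \<rhd> J x y)" using plJ Lpl by metis
  also have "... = J (neg one \<rhd> (one \<rhd> x)) (neg one \<rhd> (one \<rhd> y))" by (simp only: A12)
  also have "... = J (pl x) (pl y)" by (simp only: Lpl[symmetric] JR1 JR2)
  finally show ?thesis .
qed
lemma ng: "neg (zero \<rhd> a) = zero \<rhd> neg a"
  by (simp only: e0)
lemma plneg: "zero \<rhd> pl (neg w) = zero \<rhd> neg (mi w)"
  using h2[of "neg w"] by (metis A8 e0)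
lemma MR1: "M (zero \<rhd> a) b = M a b"
  by (simp only: ng JR1)
lemma MR2: "M a (zero \<rhd> b) = M a b"
  by (simp only: ng JR2)
lemma Mcomm: "M a b = M b a"
  using A10 by metis
lemma JR1': "zero \<rhd> a = zero \<rhd> b \<Longrightarrow> J a c = J b c"
  by (metis JR1)
lemma JR2': "zero \<rhd> a = zero \<rhd> b \<Longrightarrow> J c a = J c b"
  by (metis JR2)
lemma MR1': "zero \<rhd> a = zero \<rhd> b \<Longrightarrow> M a c = M b c"
  by (metis MR1)
lemma MR2': "zero \<rhd> a = zero \<rhd> b \<Longrightarrow> M c a = M c b"
  by (metis MR2)
lemma JrJ: "zero \<rhd> J x y = J x y"
  unfolding Jd by (simp only: c1)
lemma MrM: "zero \<rhd> M x y = M x y"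
  unfolding Jd by (simp only: A7 c1)
lemma nJr: "zero \<rhd> neg (J a b) = neg (J a b)"
  by (simp only: e0 JrJ)
lemma G1b: "M x zero = zero \<rhd> mi x"
proof -
  have "M x zero = neg (zero \<rhd> pl (neg x))" by (simp only: c2 G1a)
  also have "... = zero \<rhd> neg (pl (neg x))" by (simp only: e0)
  also have "... = zero \<rhd> mi x" using h2[of "neg x"] by (simp only: A8)
  finally show ?thesis .
qed
lemma G2a: "J (pl x) zero = zero \<rhd> pl x"
  by (simp only: G1a d3)
lemma G2b: "M (mi x) zero = zero \<rhd> mi x"
  by (simp only: G1b d6)
lemma G2c: "J (mi x) zero = zero"
  by (simp only: G1a d5)
lemma G2d: "M (pl x) zero = zero"
  by (simp only: G1b d4)
lemma G6c: "pl (M x y) = M (pl x) (pl y)"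
proof -
  have "pl (M x y) = zero \<rhd> pl (M x y)" using MrM A5a by metis
  also have "... = zero \<rhd> neg (mi (J (neg x) (neg y)))" by (rule plneg)
  also have "... = neg (J (mi (neg x)) (mi (neg y)))" by (simp only: G6b nJr)
  also have "... = M (pl x) (pl y)"
    using JR1'[OF h2[of x]] JR2'[OF h2[of y]] by metis
  finally show ?thesis .
qed
lemma mineg: "zero \<rhd> mi (neg w) = zero \<rhd> neg (pl w)"
  by (rule h2)
lemma plneg2: "zero \<rhd> neg (mi w) = zero \<rhd> pl (neg w)"
  by (rule plneg[symmetric])
lemma G6d: "mi (M x y) = M (mi x) (mi y)"
proof -
  have "mi (M x y) = zero \<rhd> mi (M x y)" using MrM A5c by metis
  also have "... = zero \<rhd> neg (pl (J (neg x) (neg y)))" by (rule h2)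
  also have "... = neg (J (pl (neg x)) (pl (neg y)))" by (simp only: G6a nJr)
  also have "... = M (mi x) (mi y)"
    using JR1'[OF plneg[of x]] JR2'[OF plneg[of y]] by metis
  finally show ?thesis .
qed
lemma G3a: "J x y = neg (J (pl x) (pl y)) \<rhd> J (mi x) (mi y)"
  using g5[of "J x y"] by (simp only: JrJ G6a G6b)
lemma G3b: "M x y = neg (M (pl x) (pl y)) \<rhd> M (mi x) (mi y)"
  using g5[of "M x y"] by (simp only: MrM G6c G6d)
lemma zz0: "zero \<rhd> zero = zero"
  by (rule zz)
lemma ppp: "zero \<rhd> pl (pl (pl x)) = zero \<rhd> pl x"
  by (metis A5a d3)
lemma pmm: "zero \<rhd> pl (mi (mi x)) = zero"
  by (metis A5a A5c d6 d5)
lemma mpp: "zero \<rhd> mi (pl (pl x)) = zero"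
  by (metis A5a A5c d3 d4)
lemma mmm: "zero \<rhd> mi (mi (mi x)) = zero \<rhd> mi x"
  by (metis A5c d6)
lemma G4a: "J (pl x) (mi x) = zero \<rhd> pl x"
proof -
  have 1: "J (pl (pl x)) (pl (mi x)) = zero \<rhd> pl x"
    using JR2'[of "pl (mi x)" zero "pl (pl x)"] d5 zz0 G1a ppp by metis
  have 2: "J (mi (pl x)) (mi (mi x)) = zero"
    using JR1'[of "mi (pl x)" zero "mi (mi x)"] d4 zz0 A10 G1a pmm by metis
  have "J (pl x) (mi x) = neg (zero \<rhd> pl x) \<rhd> zero"
    using G3a[of "pl x" "mi x"] 1 2 by simp
  also have "... = zero \<rhd> pl x"
    by (metis A1 A8 c2 c1)
  finally show ?thesis .
qed
lemma G4b: "M (pl x) (mi x) = zero \<rhd> mi x"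
proof -
  have 1: "M (pl (pl x)) (pl (mi x)) = zero"
    using MR2'[of "pl (mi x)" zero "pl (pl x)"] d5 zz0 G1b mpp by metis
  have 2: "M (mi (pl x)) (mi (mi x)) = zero \<rhd> mi x"
    using MR1'[of "mi (pl x)" zero "mi (mi x)"] d4 zz0 Mcomm G1b mmm by metis
  have "M (pl x) (mi x) = neg zero \<rhd> (zero \<rhd> mi x)"
    using G3b[of "pl x" "mi x"] 1 2 by simp
  also have "... = zero \<rhd> mi x"
    by (metis c2 c1)
  finally show ?thesis .
qed
lemma ic1: "zero \<rhd> a = zero \<rhd> b \<Longrightarrow> a \<rhd> c = b \<rhd> c"
  by (metis c5)
lemma ic2: "zero \<rhd> a = zero \<rhd> b \<Longrightarrow> c \<rhd> a = c \<rhd> b"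
  by (metis c6)
lemma pc: "zero \<rhd> a = zero \<rhd> b \<Longrightarrow> zero \<rhd> pl a = zero \<rhd> pl b"
  by (metis A5a)
lemma mc: "zero \<rhd> a = zero \<rhd> b \<Longrightarrow> zero \<rhd> mi a = zero \<rhd> mi b"
  by (metis A5c)
lemma nc: "zero \<rhd> a = zero \<rhd> b \<Longrightarrow> zero \<rhd> neg a = zero \<rhd> neg b"
  by (metis e0)
lemma rr: "zero \<rhd> (zero \<rhd> a) = zero \<rhd> a"
  by (rule c1)

definition pos where "pos p \<longleftrightarrow> zero \<rhd> pl p = zero \<rhd> p \<and> zero \<rhd> mi p = zero"

lemma pos_pl: "pos (pl x)"
  unfolding pos_def using d3 d4 by simp

lemma Jpos: assumes "pos p" "pos q" shows "J p q = neg p \<rhd> pl (p \<rhd> q)"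
proof -
  have pp: "zero \<rhd> pl p = zero \<rhd> p" and pm: "zero \<rhd> mi p = zero"
   and qp: "zero \<rhd> pl q = zero \<rhd> q" and qm: "zero \<rhd> mi q = zero"
    using assms unfolding pos_def by auto
  have pm': "zero \<rhd> mi p = zero \<rhd> zero" and qm': "zero \<rhd> mi q = zero \<rhd> zero"
    using pm qm zz0 by metis+
  have 1: "pl p \<rhd> pl q = p \<rhd> q" using ic1[OF pp] ic2[OF qp] by metis
  have 2: "mi q \<rhd> mi p = zero" using ic1[OF qm'] ic2[OF pm'] zz0 by metis
  have 3: "mi (mi q \<rhd> mi p) \<rhd> mi p = zero" using 2 c4 ic2[OF pm'] zz0 by metis
  have "J p q = (pl (p \<rhd> q) \<rhd> mi (neg p)) \<rhd> zero"
    unfolding Jd 1 3 ..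
  also have "... = neg zero \<rhd> neg (pl (p \<rhd> q) \<rhd> mi (neg p))" by (rule A1)
  also have "... = mi (neg p) \<rhd> pl (p \<rhd> q)" by (simp only: c2 A7 c1)
  also have "... = neg p \<rhd> pl (p \<rhd> q)"
  proof (rule ic1)
    show "zero \<rhd> mi (neg p) = zero \<rhd> neg p" using h2[of p] nc[OF pp] by metis
  qed
  finally show ?thesis .
qed

lemma Mpos: assumes "pos p" "pos q" shows "M p q = neg p \<rhd> mi (p \<rhd> q)"
proof -
  have pp: "zero \<rhd> pl p = zero \<rhd> p" and pm: "zero \<rhd> mi p = zero"
   and qp: "zero \<rhd> pl q = zero \<rhd> q" and qm: "zero \<rhd> mi q = zero"
    using assms unfolding pos_def by auto
  have pm': "zero \<rhd> mi p = zero \<rhd> zero" and qm': "zero \<rhd> mi q = zero \<rhd> zero"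
    using pm qm zz0 by metis+
  have np: "zero \<rhd> pl (neg p) = zero \<rhd> zero" using plneg[of p] pm e0 c2 zz0 by metis
  have nq: "zero \<rhd> pl (neg q) = zero \<rhd> zero" using plneg[of q] qm e0 c2 zz0 by metis
  have nmp: "zero \<rhd> mi (neg p) = zero \<rhd> neg p" using h2[of p] nc[OF pp] by metis
  have nmq: "zero \<rhd> mi (neg q) = zero \<rhd> neg q" using h2[of q] nc[OF qp] by metis
  have 1: "pl (neg p) \<rhd> pl (neg q) = zero" using ic1[OF np] ic2[OF nq] zz0 by metis
  have 2: "pl (pl (neg p) \<rhd> pl (neg q)) \<rhd> mi (neg (neg p)) = zero"
    unfolding 1 c3 A8 using ic2[OF pm'] zz0 by metis
  have 3: "mi (neg q) \<rhd> mi (neg p) = p \<rhd> q"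
    using ic1[OF nmq] ic2[OF nmp] A1 A8 by metis
  have "J (neg p) (neg q) = zero \<rhd> (mi (p \<rhd> q) \<rhd> mi (neg p))"
    unfolding Jd 2 3 ..
  also have "... = mi (p \<rhd> q) \<rhd> neg p" using c1 ic2[OF nmp] by metis
  finally have "J (neg p) (neg q) = mi (p \<rhd> q) \<rhd> neg p" .
  then show ?thesis by (simp only: A7)
qed

lemma pos_M: assumes "pos p" "pos q" shows "pos (M p q)"
proof -
  have pp: "zero \<rhd> pl p = zero \<rhd> p" and pm: "zero \<rhd> mi p = zero"
   and qp: "zero \<rhd> pl q = zero \<rhd> q" and qm: "zero \<rhd> mi q = zero"
    using assms unfolding pos_def by auto
  have pm': "zero \<rhd> mi p = zero \<rhd> zero" and qm': "zero \<rhd> mi q = zero \<rhd> zero"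
    using pm qm zz0 by metis+
  have "zero \<rhd> pl (M p q) = zero \<rhd> M p q"
    using G6c MR1'[OF pp] MR2'[OF qp] by metis
  moreover have "zero \<rhd> mi (M p q) = zero"
  proof -
    have "mi (M p q) = M (mi p) (mi q)" by (rule G6d)
    also have "... = M zero zero" using MR1'[OF pm'] MR2'[OF qm'] by metis
    also have "... = zero" using G1b[of zero] c4 zz0 by metis
    finally show ?thesis using zz0 by metis
  qed
  ultimately show ?thesis unfolding pos_def by blast
qed

lemma pos_J: assumes "pos p" "pos q" shows "pos (J p q)"
proof -
  have pp: "zero \<rhd> pl p = zero \<rhd> p" and pm: "zero \<rhd> mi p = zero"
   and qp: "zero \<rhd> pl q = zero \<rhd> q" and qm: "zero \<rhd> mi q = zero"
    using assms unfolding pos_def by auto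
  have pm': "zero \<rhd> mi p = zero \<rhd> zero" and qm': "zero \<rhd> mi q = zero \<rhd> zero"
    using pm qm zz0 by metis+
  have "zero \<rhd> pl (J p q) = zero \<rhd> J p q"
    using G6a JR1'[OF pp] JR2'[OF qp] by metis
  moreover have "zero \<rhd> mi (J p q) = zero"
  proof -
    have "mi (J p q) = J (mi p) (mi q)" by (rule G6b)
    also have "... = J zero zero" using JR1'[OF pm'] JR2'[OF qm'] by metis
    also have "... = zero" using G1a[of zero] c3 zz0 by metis
    finally show ?thesis using zz0 by metis
  qed
  ultimately show ?thesis unfolding pos_def by blast
qed
lemma A9m: "zero \<rhd> mi (x \<rhd> (neg x \<rhd> y)) = zero \<rhd> (mi x \<rhd> (neg (mi x) \<rhd> mi y))"
proof -
  define w where "w = x \<rhd> (neg x \<rhd> y)"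
  have 1: "zero \<rhd> mi w = zero \<rhd> neg (pl (neg w))" using h2[of "neg w"] by (simp only: A8)
  have "neg w = (neg x \<rhd> y) \<rhd> x" unfolding w_def by (rule A7)
  also have "... = neg x \<rhd> neg (neg x \<rhd> y)" by (rule A1)
  also have "... = neg x \<rhd> (y \<rhd> neg x)" by (simp only: A7)
  also have "... = neg x \<rhd> (neg (neg x) \<rhd> neg y)" by (simp only: A1[of y "neg x"])
  finally have 2: "neg w = neg x \<rhd> (neg (neg x) \<rhd> neg y)" .
  have "pl (neg w) = pl (neg x) \<rhd> (neg (pl (neg x)) \<rhd> pl (neg y))" unfolding 2 by (rule A9)
  also have "... = neg (mi x) \<rhd> (neg (pl (neg x)) \<rhd> pl (neg y))"
    by (rule ic1) (rule plneg)
  also have "... = neg (mi x) \<rhd> (mi x \<rhd> pl (neg y))"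
    using ic1[OF nc[OF plneg[of x]], of "pl (neg y)"] by (simp only: A8)
  also have "... = neg (mi x) \<rhd> (mi x \<rhd> neg (mi y))"
    using ic2[OF plneg[of y], of "mi x"] by simp
  finally have 3: "pl (neg w) = neg (mi x) \<rhd> (mi x \<rhd> neg (mi y))" .
  have "neg (pl (neg w)) = (mi x \<rhd> neg (mi y)) \<rhd> neg (mi x)" unfolding 3 by (rule A7)
  also have "... = neg (neg (mi x)) \<rhd> neg (mi x \<rhd> neg (mi y))" by (rule A1)
  also have "... = mi x \<rhd> (neg (mi y) \<rhd> mi x)" by (simp only: A8 A7)
  also have "... = mi x \<rhd> (neg (mi x) \<rhd> mi y)" by (simp only: A1[of "neg (mi y)" "mi x"] A8)
  finally have 4: "neg (pl (neg w)) = mi x \<rhd> (neg (mi x) \<rhd> mi y)" .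
  show ?thesis using 1 4 unfolding w_def by simp
qed

lemma absJpos: assumes "pos p" "pos q" shows "J p (M p q) = zero \<rhd> p"
proof -
  have J1: "J p (M p q) = neg p \<rhd> pl (p \<rhd> M p q)" by (rule Jpos[OF assms(1) pos_M[OF assms]])
  also have "... = neg p \<rhd> pl (p \<rhd> (neg p \<rhd> mi (p \<rhd> q)))" by (simp only: Mpos[OF assms])
  also have "... = neg p \<rhd> (pl p \<rhd> (neg (pl p) \<rhd> pl (mi (p \<rhd> q))))" by (simp only: A9)
  also have "... = neg p \<rhd> (pl p \<rhd> (neg (pl p) \<rhd> zero))"
    using ic2[of "pl (mi (p \<rhd> q))" zero "neg (pl p)"] d5 zz0 by metis
  also have "... = neg p \<rhd> (pl p \<rhd> (zero \<rhd> pl p))"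
    using A1[of "neg (pl p)" zero] c2 A8 by metis
  also have "... = neg p \<rhd> zero" by (simp only: c6 zz[of "pl p"])
  also have "... = zero \<rhd> p" using A1[of "neg p" zero] c2 A8 by metis
  finally show ?thesis .
qed

lemma absMpos: assumes "pos p" "pos q" shows "M p (J p q) = zero \<rhd> p"
proof -
  have pm: "zero \<rhd> mi p = zero \<rhd> zero" using assms(1) zz0 unfolding pos_def by metis
  have "M p (J p q) = neg p \<rhd> mi (p \<rhd> J p q)" by (rule Mpos[OF assms(1) pos_J[OF assms]])
  also have "... = neg p \<rhd> mi (p \<rhd> (neg p \<rhd> pl (p \<rhd> q)))" by (simp only: Jpos[OF assms])
  also have "... = neg p \<rhd> (mi p \<rhd> (neg (mi p) \<rhd> mi (pl (p \<rhd> q))))"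
    by (rule ic2) (rule A9m)
  also have "... = neg p \<rhd> (zero \<rhd> (neg (mi p) \<rhd> mi (pl (p \<rhd> q))))"
    using ic1[OF pm] by metis
  also have "... = neg p \<rhd> zero"
  proof -
    have a: "neg (mi p) \<rhd> mi (pl (p \<rhd> q)) = zero \<rhd> zero"
      using ic1[OF nc[OF pm]] ic2[of "mi (pl (p \<rhd> q))" zero] d4 zz0 c2 by metis
    show ?thesis by (simp only: a c1 zz0)
  qed
  also have "... = zero \<rhd> p" using A1[of "neg p" zero] c2 A8 by metis
  finally show ?thesis .
qed
lemma Mxx: "M x x = zero \<rhd> x"
  by (simp only: Jxx ng A8)

lemma absJneg: "J (mi a) (M (mi a) (mi b)) = zero \<rhd> mi a"
proof -
  define p where "p = pl (neg a)"
  define q where "q = pl (neg b)"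
  have ep: "zero \<rhd> neg (mi a) = zero \<rhd> p" unfolding p_def by (rule plneg[symmetric])
  have eq: "zero \<rhd> neg (mi b) = zero \<rhd> q" unfolding q_def by (rule plneg[symmetric])
  have "J (mi a) (M (mi a) (mi b)) = neg (M (neg (mi a)) (J (neg (mi a)) (neg (mi b))))"
    by (simp only: A8)
  also have "... = neg (M p (J p q))"
  proof -
    have j: "J (neg (mi a)) (neg (mi b)) = J p q" using JR1'[OF ep] JR2'[OF eq] by metis
    show ?thesis using MR1'[OF ep] j by metis
  qed
  also have "... = neg (zero \<rhd> p)"
    unfolding p_def q_def by (simp only: absMpos pos_pl)
  also have "... = zero \<rhd> mi a"
    using ep e0 A8 by metis
  finally show ?thesis .
qed

lemma absMneg: "M (mi a) (J (mi a) (mi b)) = zero \<rhd> mi a"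
proof -
  define p where "p = pl (neg a)"
  define q where "q = pl (neg b)"
  have ep: "zero \<rhd> neg (mi a) = zero \<rhd> p" unfolding p_def by (rule plneg[symmetric])
  have eq: "zero \<rhd> neg (mi b) = zero \<rhd> q" unfolding q_def by (rule plneg[symmetric])
  have "M (mi a) (J (mi a) (mi b)) = neg (J (neg (mi a)) (M (neg (mi a)) (neg (mi b))))"
    by (simp only: A8)
  also have "... = neg (J p (M p q))"
  proof -
    have j: "M (neg (mi a)) (neg (mi b)) = M p q" using MR1'[OF ep] MR2'[OF eq] by metis
    show ?thesis using JR1'[OF ep] j by metis
  qed
  also have "... = neg (zero \<rhd> p)"
    unfolding p_def q_def by (simp only: absJpos pos_pl)
  also have "... = zero \<rhd> mi a"
    using ep e0 A8 by metis
  finally show ?thesis .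
qed

lemma G7a: "J x (M x y) = J x x"
proof -
  have "J x (M x y) = neg (J (pl x) (M (pl x) (pl y))) \<rhd> J (mi x) (M (mi x) (mi y))"
    using G3a[of x "M x y"] by (simp only: G6c G6d)
  also have "... = neg (J (pl x) (pl x)) \<rhd> J (mi x) (mi x)"
    by (simp only: absJpos pos_pl absJneg Jxx)
  also have "... = J x x" by (rule G3a[symmetric])
  finally show ?thesis .
qed

lemma G7b: "M x (J x y) = M x x"
proof -
  have "M x (J x y) = neg (M (pl x) (J (pl x) (pl y))) \<rhd> M (mi x) (J (mi x) (mi y))"
    using G3b[of x "J x y"] by (simp only: G6a G6b)
  also have "... = neg (M (pl x) (pl x)) \<rhd> M (mi x) (mi x)"
    by (simp only: absMpos pos_pl absMneg Mxx)
  also have "... = M x x" by (rule G3b[symmetric])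
  finally show ?thesis .
qed
end

theorem proposition3p5:
  fixes imp :: "'a \<Rightarrow> 'a \<Rightarrow> 'a" and neg pl mi :: "'a \<Rightarrow> 'a" and one :: 'a
  assumes "quasi_wajsberg_star imp neg pl mi one"
  defines "zero \<equiv> imp one one"
      and "join \<equiv> qw_join imp neg pl mi"
      and "meet \<equiv> qw_meet imp neg pl mi"
  shows "\<forall>x y.
     (join x zero = imp zero (pl x) \<and> meet x zero = imp zero (mi x)) \<and>
     (join (pl x) zero = imp zero (pl x) \<and> meet (mi x) zero = imp zero (mi x) \<and>
      join (mi x) zero = zero \<and> meet (pl x) zero = zero) \<and>
     (join x y = imp (neg (join (pl x) (pl y))) (join (mi x) (mi y)) \<and>
      meet x y = imp (neg (meet (pl x) (pl y))) (meet (mi x) (mi y))) \<and>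
     (join (pl x) (mi x) = imp zero (pl x) \<and> meet (pl x) (mi x) = imp zero (mi x)) \<and>
     (imp zero x = imp (neg (pl x)) (mi x)) \<and>
     (pl (join x y) = join (pl x) (pl y) \<and> mi (join x y) = join (mi x) (mi y) \<and>
      pl (meet x y) = meet (pl x) (pl y) \<and> mi (meet x y) = meet (mi x) (mi y)) \<and>
     (join x (meet x y) = join x x \<and> meet x (join x y) = meet x x)"
proof -
  note H = assms(1)[unfolded quasi_wajsberg_star_def]
  interpret qw imp neg pl mi one
  proof (unfold_locales)
    fix x y z
    show "imp x y = imp (neg y) (neg x)" using H by meson
    show "imp (imp x one) (imp (imp y one) z) = imp (imp y one) (imp (imp x one) z)" using H by meson
    show "imp (imp one x) one = one" using H by meson
    show "imp (imp z z) (imp x y) = imp x y" using H by meson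
    show "imp (imp one one) (pl x) = pl (imp (imp one one) x)" using H by meson
    show "pl (imp (imp one one) x) = imp (imp x one) one" using H by meson
    show "imp (imp one one) (mi x) = mi (imp (imp one one) x)" using H by meson
    show "mi (imp (imp one one) x) = imp (imp x (neg one)) (neg one)" using H by meson
    show "imp x y = imp (imp (pl y) (mi x)) (imp (pl x) (mi y))" using H by meson
    show "neg (imp x y) = imp y x" using H by meson
    show "neg (neg x) = x" using H by meson
    show "pl (imp x (imp (neg x) y)) = imp (pl x) (imp (neg (pl x)) (pl y))" using H by meson
    show "qw_join imp neg pl mi x y = qw_join imp neg pl mi y x" using H by meson
    show "qw_join imp neg pl mi x (qw_join imp neg pl mi y z) = qw_join imp neg pl mi (qw_join imp neg pl mi x y) z" using H by meson
    show "imp x (qw_join imp neg pl mi y z) = qw_join imp neg pl mi (imp x y) (imp x z)" using H by meson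
  qed
  show ?thesis unfolding zero_def join_def meet_def qw_meet_def
    by (intro allI conjI) (rule G1a G1b G2a G2b G2c G2d G3a G3b G4a G4b g5 G6a G6b G6c G6d G7a G7b)+
qed

end
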